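(* Let $G$ be a graph of order $n$ with negative inertia $\nu^-=\nu^-(G)$. For a clique partition $F$ of $G$, let $t_i^F$ be the $i$th largest clique-degree with respect to $F$. Then $$\mathcal E(G)\le 2\min_F\sum_{i=1}^{\nu^-}t_i^F,$$ where the minimum is over all clique partitions $F$ of $G$. Equality holds if $G$ is clique-regular with respect to a minimum clique partition of size $cp(G)=n-\nu^-$.
   Context: All graphs are finite and simple. $\mathcal E(G)$ is the sum of the absolute values of the adjacency eigenvalues of $G$ and $\nu^-(G)$ the number of negative adjacency eigenvalues. A clique partition of $G$ is a set $F$ of cliques (sets of pairwise adjacent vertices) such that every edge lies in exactly one clique of $F$; $cp(G)$ is the minimum size of a clique partition, and a minimum clique partition is one of that size. The clique-degree of a vertex is the number of cliques of $F$ containing it; $G$ is clique-regular with respect to $F$ if all clique-degrees are equal. *)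

theory Defs
  imports "Jordan_Normal_Form.Char_Poly"
begin

definition simple_graph :: "nat \<Rightarrow> (nat \<Rightarrow> nat \<Rightarrow> bool) \<Rightarrow> bool" where
  "simple_graph n E \<longleftrightarrow>
     (\<forall>u v. E u v \<longrightarrow> u < n \<and> v < n) \<and>
     (\<forall>u v. E u v \<longrightarrow> E v u) \<and> (\<forall>v. \<not> E v v)"

definition adj_matrix :: "nat \<Rightarrow> (nat \<Rightarrow> nat \<Rightarrow> bool) \<Rightarrow> real mat" where
  "adj_matrix n E = mat n n (\<lambda>(i, j). if E i j then 1 else 0)"

text \<open>Adjacency eigenvalues with multiplicity: the (real) roots of the characteristic
  polynomial of the real symmetric adjacency matrix.\<close>
definition adj_eigenvalues :: "nat \<Rightarrow> (nat \<Rightarrow> nat \<Rightarrow> bool) \<Rightarrow> real multiset" where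
  "adj_eigenvalues n E = proots (char_poly (adj_matrix n E))"

definition graph_energy :: "nat \<Rightarrow> (nat \<Rightarrow> nat \<Rightarrow> bool) \<Rightarrow> real" where
  "graph_energy n E = (\<Sum>\<^sub># (image_mset abs (adj_eigenvalues n E)))"

definition neg_inertia :: "nat \<Rightarrow> (nat \<Rightarrow> nat \<Rightarrow> bool) \<Rightarrow> nat" where
  "neg_inertia n E = size (filter_mset (\<lambda>x. x < 0) (adj_eigenvalues n E))"

definition is_clique :: "nat \<Rightarrow> (nat \<Rightarrow> nat \<Rightarrow> bool) \<Rightarrow> nat set \<Rightarrow> bool" where
  "is_clique n E C \<longleftrightarrow> C \<subseteq> {0..<n} \<and> (\<forall>u\<in>C. \<forall>v\<in>C. u \<noteq> v \<longrightarrow> E u v)"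

definition clique_partition :: "nat \<Rightarrow> (nat \<Rightarrow> nat \<Rightarrow> bool) \<Rightarrow> nat set set \<Rightarrow> bool" where
  "clique_partition n E F \<longleftrightarrow>
     (\<forall>C\<in>F. is_clique n E C) \<and>
     (\<forall>u v. E u v \<longrightarrow> (\<exists>!C. C \<in> F \<and> u \<in> C \<and> v \<in> C))"

definition cp :: "nat \<Rightarrow> (nat \<Rightarrow> nat \<Rightarrow> bool) \<Rightarrow> nat" where
  "cp n E = Min {card F | F. clique_partition n E F}"

definition clique_degree :: "nat set set \<Rightarrow> nat \<Rightarrow> nat" where
  "clique_degree F v = card {C \<in> F. v \<in> C}"

definition top_clique_degree_sum :: "nat \<Rightarrow> nat set set \<Rightarrow> nat \<Rightarrow> nat" where
  "top_clique_degree_sum n F k =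
     sum_list (take k (rev (sort (map (clique_degree F) [0..<n]))))"

definition clique_regular :: "nat \<Rightarrow> nat set set \<Rightarrow> bool" where
  "clique_regular n F \<longleftrightarrow>
     (\<forall>u<n. \<forall>v<n. clique_degree F u = clique_degree F v)"

end

theory Submission
  imports Defs "Jordan_Normal_Form.Schur_Decomposition"
begin

definition orthonormal :: "nat \<Rightarrow> real vec list \<Rightarrow> bool" where
 "orthonormal n us \<longleftrightarrow> length us = n \<and> set us \<subseteq> carrier_vec n \<and>
    (\<forall>i<n. \<forall>j<n. us!i \<bullet> us!j = (if i = j then 1 else 0))"

lemma orthonormal_rows:
  assumes on: "orthonormal n us" and ab: "a < n" "b < n"
  shows "(\<Sum>k<n. us!k$a * us!k$b) = (if a = b then 1 else 0)"
proof -
  define U where "U = mat_of_cols n us"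
  have len: "length us = n" and car: "\<And>k. k < n \<Longrightarrow> us!k \<in> carrier_vec n"
    using on unfolding orthonormal_def by auto
  have U: "U \<in> carrier_mat n n" using len unfolding U_def by auto
  have "U\<^sup>T * U = 1\<^sub>m n"
  proof (rule eq_matI)
    fix i j assume ij: "i < dim_row (1\<^sub>m n)" "j < dim_col (1\<^sub>m n)"
    hence "(U\<^sup>T * U) $$ (i,j) = us!i \<bullet> us!j"
      using U len car unfolding U_def by (simp add: col_mat_of_cols)
    also have "\<dots> = 1\<^sub>m n $$ (i,j)" using on ij unfolding orthonormal_def by auto
    finally show "(U\<^sup>T * U) $$ (i,j) = 1\<^sub>m n $$ (i,j)" .
  qed (use U in auto)
  hence "U * U\<^sup>T = 1\<^sub>m n" using mat_mult_left_right_inverse[of "U\<^sup>T" n U] U by auto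
  hence "(U * U\<^sup>T) $$ (a,b) = (if a = b then 1 else 0)" using ab by simp
  moreover have "(U * U\<^sup>T) $$ (a,b) = (\<Sum>k<n. us!k$a * us!k$b)"
    using ab U len unfolding U_def
    by (auto simp: scalar_prod_def row_def atLeast0LessThan mat_of_cols_def intro!: sum.cong)
  ultimately show ?thesis by simp
qed

lemma orthonormal_expand:
  assumes on: "orthonormal n us" and x: "x \<in> carrier_vec n" and a: "a < n"
  shows "(\<Sum>k<n. (x \<bullet> us!k) * us!k$a) = x$a"
proof -
  have dk: "\<And>k. k < n \<Longrightarrow> dim_vec (us!k) = n" using on unfolding orthonormal_def
    by (metis carrier_vecD nth_mem subsetD)
  have "(\<Sum>k<n. (x \<bullet> us!k) * us!k$a) = (\<Sum>k<n. \<Sum>b<n. x$b * (us!k$b * us!k$a))"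
    using dk
    by (auto simp: scalar_prod_def sum_distrib_right atLeast0LessThan mult.assoc intro!: sum.cong)
  also have "\<dots> = (\<Sum>b<n. x$b * (\<Sum>k<n. us!k$b * us!k$a))"
    by (subst sum.swap) (simp add: sum_distrib_left)
  also have "\<dots> = (\<Sum>b<n. x$b * (if b = a then 1 else 0))"
    using orthonormal_rows[OF on] a by (intro sum.cong) auto
  also have "\<dots> = x$a" using a by (simp add: if_distrib cong: if_cong)
  finally show ?thesis .
qed

lemma real_eigen_exists:
  fixes A :: "real mat"
  assumes A: "A \<in> carrier_mat n n"
    and sym: "\<And>i j. i < n \<Longrightarrow> j < n \<Longrightarrow> A$$(i,j) = A$$(j,i)" and n: "n > 0"
  shows "\<exists>e v. v \<in> carrier_vec n \<and> v \<noteq> 0\<^sub>v n \<and> A *\<^sub>v v = e \<cdot>\<^sub>v v"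
proof -
  define B where "B = map_mat complex_of_real A"
  have B: "B \<in> carrier_mat n n" using A by (simp add: B_def)
  obtain as where cp: "char_poly B = (\<Prod>a\<leftarrow>as. [:-a,1:])" and len: "length as = n"
    using char_poly_factorized[OF B] by blast
  then obtain l where l: "l \<in> set as" using n by (cases as) auto
  have "poly (char_poly B) l = 0" unfolding cp using linear_poly_root[OF l] .
  hence "eigenvalue B l" using eigenvalue_root_char_poly[OF B] by simp
  then obtain v where v: "v \<in> carrier_vec n" "v \<noteq> 0\<^sub>v n" "B *\<^sub>v v = l \<cdot>\<^sub>v v"
    unfolding eigenvalue_def eigenvector_def using B by auto
  have Bv: "(\<Sum>j<n. complex_of_real (A$$(i,j)) * v$j) = l * v$i" if i: "i < n" for i
  proof -
    have "(B *\<^sub>v v) $ i = l * v $ i" using v(3) i v(1) by (metis carrier_vecD index_smult_vec(1))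
    moreover have "(B *\<^sub>v v) $ i = (\<Sum>j<n. complex_of_real (A$$(i,j)) * v$j)"
      using i A v(1) B by (simp add: B_def scalar_prod_def row_def atLeast0LessThan)
    ultimately show ?thesis by simp
  qed
  define s where "s = (\<Sum>i<n. \<Sum>j<n. complex_of_real (A$$(i,j)) * v$j * cnj (v$i))"
  define r where "r = (\<Sum>i<n. v$i * cnj (v$i))"
  have s_eq: "s = l * r"
  proof -
    have "s = (\<Sum>i<n. (\<Sum>j<n. complex_of_real (A$$(i,j)) * v$j) * cnj (v$i))"
      unfolding s_def by (simp add: sum_distrib_right)
    also have "\<dots> = (\<Sum>i<n. l * v$i * cnj (v$i))" using Bv by (intro sum.cong) auto
    finally show ?thesis unfolding r_def by (simp add: sum_distrib_left mult.assoc)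
  qed
  have cs: "cnj s = s"
  proof -
    have "cnj s = (\<Sum>i<n. \<Sum>j<n. complex_of_real (A$$(i,j)) * cnj (v$j) * v$i)"
      unfolding s_def by (simp add: cnj_sum)
    also have "\<dots> = (\<Sum>j<n. \<Sum>i<n. complex_of_real (A$$(i,j)) * cnj (v$j) * v$i)"
      by (rule sum.swap)
    also have "\<dots> = s" unfolding s_def using sym
      by (intro sum.cong refl) (auto simp: mult.commute mult.left_commute)
    finally show ?thesis .
  qed
  have rr: "r = complex_of_real (\<Sum>i<n. (cmod (v$i))\<^sup>2)"
    unfolding r_def of_real_sum complex_norm_square ..
  obtain i where i: "i < n" "v$i \<noteq> 0" using v(1,2) by (metis carrier_vecD eq_vecI index_zero_vec(1,2))
  have "(\<Sum>i<n. (cmod (v$i))\<^sup>2) > 0"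
  proof -
    have "(\<Sum>i<n. (cmod (v$i))\<^sup>2) \<ge> (cmod (v$i))\<^sup>2"
      using i by (intro member_le_sum) auto
    moreover have "(cmod (v$i))\<^sup>2 > 0" using i by simp
    ultimately show ?thesis by linarith
  qed
  hence r0: "r \<noteq> 0" unfolding rr by (metis of_real_eq_0_iff less_irrefl)
  have cr: "cnj r = r" unfolding rr by (simp only: complex_cnj_complex_of_real)
  have "l = s / r" using s_eq r0 by simp
  hence "cnj l = l" using cs cr by simp
  hence "Im l = 0" by (metis cnj.simps(2) neg_equal_zero)
  hence lr: "l = complex_of_real (Re l)" by (simp add: complex_eq_iff)
  have "complex_of_real (poly (char_poly A) (Re l)) = 0"
    using \<open>poly (char_poly B) l = 0\<close> of_real_hom.char_poly_hom[OF A] lr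
    unfolding B_def by (metis of_real_hom.poly_map_poly)
  hence "poly (char_poly A) (Re l) = 0" by simp
  hence "eigenvalue A (Re l)" using eigenvalue_root_char_poly[OF A] by simp
  thus ?thesis unfolding eigenvalue_def eigenvector_def using A by auto
qed


lemma orthonormal_basis_first:
  fixes v :: "real vec"
  assumes v: "v \<in> carrier_vec n" and v0: "v \<noteq> 0\<^sub>v n"
  shows "\<exists>ws c. orthonormal n ws \<and> ws!0 = c \<cdot>\<^sub>v v"
proof -
  interpret cof_vec_space n "TYPE(real)" .
  define b where "b = basis_completion v"
  note bc = basis_completion[OF v v0, folded b_def]
  define ws0 where "ws0 = gram_schmidt n b"
  note gs = gram_schmidt_result[OF bc(2) bc(4) bc(5) ws0_def]
  have n0: "n \<noteq> 0" using v v0 by auto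
  then obtain vs where bv: "b = v # vs" using bc(6,7) by (cases b) auto
  have hd0: "ws0 ! 0 = v" using gram_schmidt_hd[OF v, of vs] gs(4) bc(6) n0
    unfolding ws0_def bv by (metis hd_conv_nth list.size(3))
  have len0: "length ws0 = n" using gs(4) bc(6) by simp
  have car0: "\<And>i. i < n \<Longrightarrow> ws0!i \<in> carrier_vec n" using gs(3) len0 by auto
  have pos: "ws0!i \<bullet> ws0!i > 0" if i: "i < n" for i
  proof -
    have "ws0!i \<bullet> ws0!i \<noteq> 0" using gs(2) i len0 unfolding corthogonal_def by auto
    moreover have "ws0!i \<bullet> ws0!i \<ge> 0" unfolding scalar_prod_def by (intro sum_nonneg) auto
    ultimately show ?thesis by linarith
  qed
  define ws where "ws = map (\<lambda>w. (1 / sqrt (w \<bullet> w)) \<cdot>\<^sub>v w) ws0"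
  have "orthonormal n ws"
    unfolding orthonormal_def
  proof (intro conjI allI impI)
    show "length ws = n" using len0 ws_def by simp
    show "set ws \<subseteq> carrier_vec n" using car0 len0 unfolding ws_def
      by (auto simp: in_set_conv_nth)
    fix i j assume i: "i < n" and j: "j < n"
    have "ws!i \<bullet> ws!j = (1 / sqrt (ws0!i \<bullet> ws0!i)) * (1 / sqrt (ws0!j \<bullet> ws0!j)) * (ws0!i \<bullet> ws0!j)"
      unfolding ws_def using i j len0 car0[OF i] car0[OF j]
      by (simp add: smult_scalar_prod_distrib scalar_prod_smult_distrib)
    also have "\<dots> = (if i = j then 1 else 0)"
    proof (cases "i = j")
      case True
      have "sqrt (ws0!i \<bullet> ws0!i) * sqrt (ws0!i \<bullet> ws0!i) = ws0!i \<bullet> ws0!i"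
        using pos[OF i] by simp
      then show ?thesis using True pos[OF i] by (simp add: field_simps)
    next
      case False
      have "ws0!i \<bullet> ws0!j = 0" using gs(2) i j len0 False unfolding corthogonal_def by auto
      then show ?thesis using False by simp
    qed
    finally show "ws!i \<bullet> ws!j = (if i = j then 1 else 0)" .
  qed
  moreover have "ws!0 = (1 / sqrt (v \<bullet> v)) \<cdot>\<^sub>v v" unfolding ws_def using n0 len0 hd0 by simp
  ultimately show ?thesis by blast
qed


lemma sym_scalar:
  fixes A :: "real mat"
  assumes A: "A \<in> carrier_mat n n" and sym: "\<And>i j. i < n \<Longrightarrow> j < n \<Longrightarrow> A$$(i,j) = A$$(j,i)"
    and x: "x \<in> carrier_vec n" and y: "y \<in> carrier_vec n"
  shows "x \<bullet> (A *\<^sub>v y) = y \<bullet> (A *\<^sub>v x)"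
proof -
  have AT: "A\<^sup>T = A" using A sym by (intro eq_matI) auto
  have "x \<bullet> (A *\<^sub>v y) = (A\<^sup>T *\<^sub>v x) \<bullet> y" using transpose_vec_mult_scalar[OF A y x] by simp
  also have "\<dots> = y \<bullet> (A *\<^sub>v x)" unfolding AT using A x y by (intro comm_scalar_prod) auto
  finally show ?thesis .
qed

lemma orthonormal_eq:
  assumes on: "orthonormal n us" and x: "x \<in> carrier_vec n" and z: "z \<in> carrier_vec n"
    and eq: "\<And>k. k < n \<Longrightarrow> x \<bullet> us!k = z \<bullet> us!k"
  shows "x = z"
proof (rule eq_vecI)
  fix a assume "a < dim_vec z"
  hence a: "a < n" using z by simp
  have "x$a = (\<Sum>k<n. (x \<bullet> us!k) * us!k$a)" using orthonormal_expand[OF on x a] by simp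
  also have "\<dots> = (\<Sum>k<n. (z \<bullet> us!k) * us!k$a)" using eq by simp
  also have "\<dots> = z$a" using orthonormal_expand[OF on z a] by simp
  finally show "x$a = z$a" .
qed (use x z in simp)

lemma spectral:
  fixes A :: "real mat"
  assumes "A \<in> carrier_mat n n" and "\<And>i j. i < n \<Longrightarrow> j < n \<Longrightarrow> A$$(i,j) = A$$(j,i)"
  shows "\<exists>us es. orthonormal n us \<and> length es = n \<and> (\<forall>i<n. A *\<^sub>v (us!i) = es!i \<cdot>\<^sub>v us!i)"
  using assms
proof (induction n arbitrary: A)
  case 0
  then show ?case by (intro exI[of _ "[]"]) (auto simp: orthonormal_def)
next
  case (Suc m)
  define n where "n = Suc m"
  have A: "A \<in> carrier_mat n n" and sym: "\<And>i j. i < n \<Longrightarrow> j < n \<Longrightarrow> A$$(i,j) = A$$(j,i)"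
    using Suc.prems unfolding n_def by auto
  obtain e v where v: "v \<in> carrier_vec n" "v \<noteq> 0\<^sub>v n" "A *\<^sub>v v = e \<cdot>\<^sub>v v"
    using real_eigen_exists[OF A sym] unfolding n_def by auto
  obtain ws c where on: "orthonormal n ws" and w0: "ws!0 = c \<cdot>\<^sub>v v"
    using orthonormal_basis_first[OF v(1,2)] by blast
  have len: "length ws = n" and car: "\<And>k. k < n \<Longrightarrow> ws!k \<in> carrier_vec n"
    and orth: "\<And>i j. i < n \<Longrightarrow> j < n \<Longrightarrow> ws!i \<bullet> ws!j = (if i = j then 1 else 0)"
    using on unfolding orthonormal_def by auto
  have Aw0: "A *\<^sub>v ws!0 = e \<cdot>\<^sub>v ws!0"
    unfolding w0 using mult_mat_vec[OF A v(1)] v(3) by (simp add: smult_smult_assoc mult.commute)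
  define A3 where "A3 = mat m m (\<lambda>(i,j). ws!(Suc i) \<bullet> (A *\<^sub>v ws!(Suc j)))"
  have A3: "A3 \<in> carrier_mat m m" unfolding A3_def by simp
  have sym3: "A3$$(i,j) = A3$$(j,i)" if "i < m" "j < m" for i j
    unfolding A3_def using that sym_scalar[OF A sym car car] n_def by simp
  obtain us3 es3 where on3: "orthonormal m us3" and les3: "length es3 = m"
    and eig3: "\<And>i. i < m \<Longrightarrow> A3 *\<^sub>v (us3!i) = es3!i \<cdot>\<^sub>v us3!i"
    using Suc.IH[OF A3 sym3] by blast
  define lift where "lift y = vec n (\<lambda>a. \<Sum>j<m. y$j * ws!(Suc j)$a)" for y :: "real vec"
  have lift_car: "lift y \<in> carrier_vec n" for y unfolding lift_def by simp
  have lift_dot: "lift y \<bullet> x = (\<Sum>j<m. y$j * (ws!(Suc j) \<bullet> x))" if x: "x \<in> carrier_vec n" for x y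
  proof -
    have "lift y \<bullet> x = (\<Sum>a<n. (\<Sum>j<m. y$j * ws!(Suc j)$a) * x$a)"
      unfolding lift_def scalar_prod_def using x by (simp add: atLeast0LessThan)
    also have "\<dots> = (\<Sum>j<m. \<Sum>a<n. y$j * (ws!(Suc j)$a * x$a))"
      by (simp add: sum_distrib_right sum.swap[of _ "{..<n}"] mult.assoc)
    also have "\<dots> = (\<Sum>j<m. y$j * (ws!(Suc j) \<bullet> x))"
      using x by (simp add: scalar_prod_def sum_distrib_left atLeast0LessThan)
    finally show ?thesis .
  qed
  have lift_ws: "lift y \<bullet> ws!k = (if k = 0 then 0 else y$(k - 1))" if k: "k < n" for y k
  proof -
    have "lift y \<bullet> ws!k = (\<Sum>j<m. y$j * (if Suc j = k then 1 else 0))"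
      using lift_dot[OF car[OF k]] orth k n_def by simp
    also have "\<dots> = (if k = 0 then 0 else y$(k - 1))"
      using k n_def by (cases k) (auto simp: if_distrib cong: if_cong)
    finally show ?thesis .
  qed
  have lift_lift: "lift y \<bullet> lift z = y \<bullet> z" if z: "z \<in> carrier_vec m" for y z
  proof -
    have "lift y \<bullet> lift z = (\<Sum>j<m. y$j * (ws!(Suc j) \<bullet> lift z))"
      by (rule lift_dot[OF lift_car])
    also have "\<dots> = (\<Sum>j<m. z$j * y$j)"
    proof (intro sum.cong refl)
      fix j assume j: "j \<in> {..<m}"
      have "ws!(Suc j) \<bullet> lift z = lift z \<bullet> ws!(Suc j)"
        using car[of "Suc j"] j n_def lift_car by (metis comm_scalar_prod lessThan_iff Suc_mono)
      also have "\<dots> = z$j" using lift_ws[of "Suc j"] j n_def by simp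
      finally show "y$j * (ws!(Suc j) \<bullet> lift z) = z$j * y$j" by simp
    qed
    also have "\<dots> = y \<bullet> z" using z by (simp add: scalar_prod_def atLeast0LessThan mult.commute)
    finally show ?thesis .
  qed
  have lift_smult: "lift (k \<cdot>\<^sub>v y) = k \<cdot>\<^sub>v lift y" if y: "y \<in> carrier_vec m" for k y
    unfolding lift_def using y by (intro eq_vecI) (auto simp: sum_distrib_left mult.assoc)
  have A_lift: "A *\<^sub>v lift y = lift (A3 *\<^sub>v y)" if y: "y \<in> carrier_vec m" for y
  proof (rule orthonormal_eq[OF on])
    show "A *\<^sub>v lift y \<in> carrier_vec n" using A lift_car by simp
    show "lift (A3 *\<^sub>v y) \<in> carrier_vec n" by (rule lift_car)
    fix k assume k: "k < n"
    have "(A *\<^sub>v lift y) \<bullet> ws!k = ws!k \<bullet> (A *\<^sub>v lift y)"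
      using A k car lift_car by (metis comm_scalar_prod mult_mat_vec_carrier)
    also have "\<dots> = lift y \<bullet> (A *\<^sub>v ws!k)" using sym_scalar[OF A sym car[OF k] lift_car] .
    also have "\<dots> = (\<Sum>j<m. y$j * (ws!(Suc j) \<bullet> (A *\<^sub>v ws!k)))"
      using lift_dot A car[OF k] by simp
    also have "\<dots> = lift (A3 *\<^sub>v y) \<bullet> ws!k"
    proof (cases k)
      case 0
      have "ws!(Suc j) \<bullet> (A *\<^sub>v ws!k) = 0" if "j < m" for j
      proof -
        have c1: "ws!(Suc j) \<in> carrier_vec n" "ws!0 \<in> carrier_vec n" using car that n_def by auto
        have "ws!(Suc j) \<bullet> (e \<cdot>\<^sub>v ws!0) = e * (ws!(Suc j) \<bullet> ws!0)"
          by (rule scalar_prod_smult_right) (use c1 in simp)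
        then show ?thesis using 0 Aw0 orth[of "Suc j" 0] that n_def by simp
      qed
      then show ?thesis using lift_ws k 0 by simp
    next
      case (Suc i)
      have "(\<Sum>j<m. y$j * (ws!(Suc j) \<bullet> (A *\<^sub>v ws!k))) = (\<Sum>j<m. A3 $$ (i,j) * y$j)"
        using Suc k n_def sym3 unfolding A3_def by (intro sum.cong) (auto simp: mult.commute)
      also have "\<dots> = (A3 *\<^sub>v y) $ i"
        using Suc k n_def A3 y by (simp add: scalar_prod_def row_def atLeast0LessThan)
      finally show ?thesis using lift_ws k Suc by simp
    qed
    finally show "(A *\<^sub>v lift y) \<bullet> ws!k = lift (A3 *\<^sub>v y) \<bullet> ws!k" .
  qed
  define us where "us = ws!0 # map lift us3"
  define es where "es = e # es3"
  have len3: "length us3 = m" and car3: "\<And>k. k < m \<Longrightarrow> us3!k \<in> carrier_vec m"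
    and orth3: "\<And>i j. i < m \<Longrightarrow> j < m \<Longrightarrow> us3!i \<bullet> us3!j = (if i = j then 1 else 0)"
    using on3 unfolding orthonormal_def by auto
  have "orthonormal n us"
    unfolding orthonormal_def
  proof (intro conjI allI impI)
    show "length us = n" using len3 n_def us_def by simp
    show "set us \<subseteq> carrier_vec n" using car n_def lift_car unfolding us_def by auto
    fix i j assume i: "i < n" and j: "j < n"
    show "us!i \<bullet> us!j = (if i = j then 1 else 0)"
    proof (cases i)
      case 0
      then show ?thesis
      proof (cases j)
        case 0 then show ?thesis using \<open>i = 0\<close> orth n_def us_def by simp
      next
        case (Suc j')
        have "ws!0 \<bullet> lift (us3!j') = 0"
          using lift_ws[of 0] car n_def lift_car by (metis comm_scalar_prod zero_less_Suc)
        then show ?thesis using \<open>i = 0\<close> Suc j n_def len3 us_def by simp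
      qed
    next
      case (Suc i')
      then show ?thesis
      proof (cases j)
        case 0
        then show ?thesis using Suc i n_def len3 us_def lift_ws[of 0] by simp
      next
        case (Suc j')
        then show ?thesis using \<open>i = Suc i'\<close> i j n_def len3 us_def lift_lift car3 orth3 by simp
      qed
    qed
  qed
  moreover have "length es = n" using les3 es_def n_def by simp
  moreover have "\<forall>i<n. A *\<^sub>v (us!i) = es!i \<cdot>\<^sub>v us!i"
  proof (intro allI impI)
    fix i assume i: "i < n"
    show "A *\<^sub>v (us!i) = es!i \<cdot>\<^sub>v us!i"
    proof (cases i)
      case 0 then show ?thesis using Aw0 us_def es_def by simp
    next
      case (Suc i')
      then have i': "i' < m" using i n_def by simp
      then show ?thesis using Suc A_lift[OF car3[OF i']] eig3[OF i'] lift_smult[OF car3[OF i']] len3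
        unfolding us_def es_def by simp
    qed
  qed
  ultimately show ?case unfolding n_def by blast
qed

lemma orthonormal_mat:
  assumes on: "orthonormal n us"
  shows "mat_of_cols n us \<in> carrier_mat n n" "(mat_of_cols n us)\<^sup>T * mat_of_cols n us = 1\<^sub>m n"
    "mat_of_cols n us * (mat_of_cols n us)\<^sup>T = 1\<^sub>m n"
proof -
  define U where "U = mat_of_cols n us"
  have len: "length us = n" and car: "\<And>k. k < n \<Longrightarrow> us!k \<in> carrier_vec n"
    using on unfolding orthonormal_def by auto
  have U: "U \<in> carrier_mat n n" using len unfolding U_def by auto
  have 1: "U\<^sup>T * U = 1\<^sub>m n"
  proof (rule eq_matI)
    fix i j assume ij: "i < dim_row (1\<^sub>m n)" "j < dim_col (1\<^sub>m n)"
    hence "(U\<^sup>T * U) $$ (i,j) = us!i \<bullet> us!j"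
      using U len car unfolding U_def by simp
    also have "\<dots> = 1\<^sub>m n $$ (i,j)" using on ij unfolding orthonormal_def by auto
    finally show "(U\<^sup>T * U) $$ (i,j) = 1\<^sub>m n $$ (i,j)" .
  qed (use U in auto)
  then show "U\<^sup>T * U = 1\<^sub>m n" "U \<in> carrier_mat n n" "U * U\<^sup>T = 1\<^sub>m n"
    using mat_mult_left_right_inverse[of "U\<^sup>T" n U] U by auto
qed

lemma char_poly_spectral:
  fixes A :: "real mat"
  assumes A: "A \<in> carrier_mat n n" and on: "orthonormal n us" and les: "length es = n"
    and eig: "\<And>i. i < n \<Longrightarrow> A *\<^sub>v (us!i) = es!i \<cdot>\<^sub>v us!i"
  shows "char_poly A = (\<Prod>a\<leftarrow>es. [:-a,1:])"
proof -
  define U where "U = mat_of_cols n us"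
  define D where "D = mat n n (\<lambda>(i,j). if i = j then es!i else (0::real))"
  note Um = orthonormal_mat[OF on, folded U_def]
  have len: "length us = n" and car: "\<And>k. k < n \<Longrightarrow> us!k \<in> carrier_vec n"
    using on unfolding orthonormal_def by auto
  have D: "D \<in> carrier_mat n n" unfolding D_def by simp
  have AU: "A * U = U * D"
  proof (rule eq_matI)
    fix i k assume ik: "i < dim_row (U * D)" "k < dim_col (U * D)"
    hence i: "i < n" and k: "k < n" using Um D by auto
    have "(A * U) $$ (i,k) = (A *\<^sub>v us!k) $ i"
      using A Um i k len car unfolding U_def by (simp add: col_mat_of_cols)
    also have "\<dots> = es!k * us!k$i" using eig[OF k] car[OF k] i by simp
    also have "\<dots> = (U * D) $$ (i,k)"
    proof -
      have "(U * D) $$ (i,k) = (\<Sum>j<n. U$$(i,j) * D$$(j,k))"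
        using Um D i k by (simp add: scalar_prod_def atLeast0LessThan)
      also have "\<dots> = (\<Sum>j<n. if j = k then us!k$i * es!k else 0)"
        using i k len unfolding U_def D_def by (intro sum.cong) (auto simp: mat_of_cols_def)
      also have "\<dots> = us!k$i * es!k" using k by simp
      finally show ?thesis by simp
    qed
    finally show "(A * U) $$ (i,k) = (U * D) $$ (i,k)" .
  qed (use A Um D in auto)
  have "A = A * (U * U\<^sup>T)" using Um(3) A by simp
  also have "\<dots> = (A * U) * U\<^sup>T" using A Um by (simp add: assoc_mult_mat)
  also have "\<dots> = U * D * U\<^sup>T" unfolding AU ..
  finally have AUD: "A = U * D * U\<^sup>T" .
  have "similar_mat_wit A D U U\<^sup>T"
    unfolding similar_mat_wit_def Let_def using A D Um AUD by auto
  hence "similar_mat A D" unfolding similar_mat_def by blast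
  hence "char_poly A = char_poly D" by (rule char_poly_similar)
  also have "\<dots> = (\<Prod>a\<leftarrow>diag_mat D. [:-a,1:])"
    by (rule char_poly_upper_triangular[OF D]) (auto simp: upper_triangular_def D_def)
  also have "diag_mat D = es" unfolding diag_mat_def D_def using les
    by (intro nth_equalityI) auto
  finally show ?thesis .
qed

lemma proots_linear_prod: "proots (\<Prod>a\<leftarrow>es. [:-a,1:]) = mset (es :: real list)"
proof (induction es)
  case Nil then show ?case by simp
next
  case (Cons a es)
  have "(\<Prod>a\<leftarrow>es. [:-a,1::real:]) \<noteq> 0" by (auto simp: prod_list_zero_iff)
  have "(\<Prod>x\<leftarrow>a#es. [:-x,1:]) = [:-a,1:] * (\<Prod>x\<leftarrow>es. [:-x,1::real:])"
    by (simp only: list.map prod_list.Cons)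
  moreover have "proots ([:-a,1:] * (\<Prod>x\<leftarrow>es. [:-x,1::real:])) = proots [:-a,1::real:] + proots (\<Prod>x\<leftarrow>es. [:-x,1::real:])"
    by (rule proots_mult) (use \<open>_ \<noteq> 0\<close> in auto)
  ultimately show ?case using Cons by (simp only: proots_linear_factor) simp
qed

lemma quad_form:
  fixes A :: "real mat"
  assumes A: "A \<in> carrier_mat n n" and x: "x \<in> carrier_vec n"
  shows "x \<bullet> (A *\<^sub>v x) = (\<Sum>a<n. \<Sum>b<n. A$$(a,b) * x$a * x$b)"
proof -
  have "x \<bullet> (A *\<^sub>v x) = (\<Sum>a<n. x$a * (\<Sum>b<n. A$$(a,b) * x$b))"
    using A x by (simp add: scalar_prod_def atLeast0LessThan row_def)
  also have "\<dots> = (\<Sum>a<n. \<Sum>b<n. A$$(a,b) * x$a * x$b)"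
    by (simp add: sum_distrib_left mult.commute mult.left_commute)
  finally show ?thesis .
qed

lemma trace_spectral:
  fixes A :: "real mat"
  assumes A: "A \<in> carrier_mat n n" and on: "orthonormal n us" and les: "length es = n"
    and eig: "\<And>i. i < n \<Longrightarrow> A *\<^sub>v (us!i) = es!i \<cdot>\<^sub>v us!i"
  shows "(\<Sum>i<n. es!i) = (\<Sum>a<n. A$$(a,a))"
proof -
  have car: "\<And>k. k < n \<Longrightarrow> us!k \<in> carrier_vec n"
    and orth: "\<And>i. i < n \<Longrightarrow> us!i \<bullet> us!i = 1"
    using on unfolding orthonormal_def by auto
  have "es!i = us!i \<bullet> (A *\<^sub>v us!i)" if i: "i < n" for i
    using eig[OF i] orth[OF i] car[OF i] by simp
  hence "(\<Sum>i<n. es!i) = (\<Sum>i<n. \<Sum>a<n. \<Sum>b<n. A$$(a,b) * us!i$a * us!i$b)"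
    using quad_form[OF A car] by simp
  also have "\<dots> = (\<Sum>a<n. \<Sum>i<n. \<Sum>b<n. A$$(a,b) * us!i$a * us!i$b)" by (rule sum.swap)
  also have "\<dots> = (\<Sum>a<n. \<Sum>b<n. \<Sum>i<n. A$$(a,b) * us!i$a * us!i$b)"
    by (rule sum.cong[OF refl], rule sum.swap)
  also have "\<dots> = (\<Sum>a<n. \<Sum>b<n. A$$(a,b) * (\<Sum>i<n. us!i$a * us!i$b))"
    by (simp add: sum_distrib_left mult.assoc)
  also have "\<dots> = (\<Sum>a<n. \<Sum>b<n. A$$(a,b) * (if a = b then 1 else 0))"
    using orthonormal_rows[OF on] by simp
  also have "\<dots> = (\<Sum>a<n. A$$(a,a))" by (simp add: if_distrib cong: if_cong)
  finally show ?thesis .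
qed

lemma lin_dep_exists:
  fixes y :: "'i \<Rightarrow> 'j \<Rightarrow> real"
  assumes "finite J" "finite P" "card J < card P"
  shows "\<exists>c. (\<exists>i\<in>P. c i \<noteq> 0) \<and> (\<forall>j\<in>J. (\<Sum>i\<in>P. c i * y i j) = 0)"
  using assms
proof (induction J arbitrary: P y rule: finite_induct)
  case empty
  then obtain i where "i \<in> P" by fastforce
  then show ?case by (intro exI[of _ "\<lambda>_. 1"]) auto
next
  case (insert j0 J)
  show ?case
  proof (cases "\<forall>i\<in>P. y i j0 = 0")
    case True
    obtain c where c: "\<exists>i\<in>P. c i \<noteq> 0" "\<forall>j\<in>J. (\<Sum>i\<in>P. c i * y i j) = 0"
      using insert.IH[OF insert.prems(1), of y] insert.prems(2) insert.hyps by auto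
    then show ?thesis using True by (intro exI[of _ c]) auto
  next
    case False
    then obtain i0 where i0: "i0 \<in> P" "y i0 j0 \<noteq> 0" by auto
    define P' where "P' = P - {i0}"
    define y' where "y' i j = y i j - (y i j0 / y i0 j0) * y i0 j" for i j
    have cP': "card J < card P'" using insert.prems insert.hyps i0 unfolding P'_def by auto
    obtain c' where c': "\<exists>i\<in>P'. c' i \<noteq> 0" "\<forall>j\<in>J. (\<Sum>i\<in>P'. c' i * y' i j) = 0"
      using insert.IH[OF _ cP', of y'] insert.prems unfolding P'_def by auto
    define c where "c i = (if i = i0 then - (\<Sum>i\<in>P'. c' i * y i j0) / y i0 j0 else c' i)" for i
    have key: "(\<Sum>i\<in>P. c i * y i j) = (\<Sum>i\<in>P'. c' i * y' i j)" for j
    proof -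
      have fP: "finite P'" using insert.prems unfolding P'_def by auto
      have e1: "(\<Sum>i\<in>P. c i * y i j) = c i0 * y i0 j + (\<Sum>i\<in>P'. c i * y i j)"
        unfolding P'_def using i0 insert.prems by (simp add: sum.remove)
      have e2: "(\<Sum>i\<in>P'. c i * y i j) = (\<Sum>i\<in>P'. c' i * y i j)"
        unfolding c_def P'_def by (intro sum.cong) auto
      have "(\<Sum>i\<in>P'. c' i * y' i j) = (\<Sum>i\<in>P'. c' i * y i j - (c' i * y i j0) * (y i0 j / y i0 j0))"
        unfolding y'_def by (intro sum.cong) (auto simp: algebra_simps)
      also have "\<dots> = (\<Sum>i\<in>P'. c' i * y i j) - (\<Sum>i\<in>P'. c' i * y i j0) * (y i0 j / y i0 j0)"
        by (simp add: sum_subtractf sum_distrib_right sum_divide_distrib)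
      finally have e3: "(\<Sum>i\<in>P'. c' i * y' i j) = (\<Sum>i\<in>P'. c' i * y i j) - (\<Sum>i\<in>P'. c' i * y i j0) * (y i0 j / y i0 j0)" .
      have ci0: "c i0 = - (\<Sum>i\<in>P'. c' i * y i j0) / y i0 j0" by (simp add: c_def)
      show ?thesis unfolding e1 e2 e3 ci0 by (simp add: algebra_simps)
    qed
    show ?thesis
    proof (intro exI[of _ c] conjI ballI)
      show "\<exists>i\<in>P. c i \<noteq> 0" using c' unfolding c_def P'_def by auto
      fix j assume j: "j \<in> insert j0 J"
      show "(\<Sum>i\<in>P. c i * y i j) = 0"
      proof (cases "j = j0")
        case True
        have "y' i j0 = 0" for i unfolding y'_def using i0 by simp
        then show ?thesis unfolding key True by simp
      next
        case False
        then show ?thesis using j c' key by auto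
      qed
    qed
  qed
qed

lemma top_sum_bound:
  fixes d :: "nat \<Rightarrow> nat" and w :: "nat \<Rightarrow> real"
  assumes w: "\<And>a. a < n \<Longrightarrow> 0 \<le> w a \<and> w a \<le> 1"
    and sw: "(\<Sum>a<n. w a) = real k" and kn: "k \<le> n"
  shows "(\<Sum>a<n. real (d a) * w a) \<le> real (sum_list (take k (rev (sort (map d [0..<n])))))"
proof -
  define L where "L = rev (sort (map d [0..<n]))"
  have lenL: "length L = n" unfolding L_def by simp
  have msL: "mset L = mset (map d [0..<n])" unfolding L_def by simp
  have sortedL: "sorted_wrt (\<ge>) L" unfolding L_def
    by (simp add: sorted_wrt_rev)
  have rhs: "real (sum_list (take k L)) = (\<Sum>i<k. real (L!i))"
    using kn lenL by (simp add: sum_list_sum_nth atLeast0LessThan)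
  show ?thesis
  proof (cases "k = 0")
    case True
    have "w a = 0" if "a < n" for a
    proof -
      have "(\<Sum>a<n. w a) = 0" using sw True by simp
      hence "\<forall>a\<in>{..<n}. w a = 0" using w by (subst sum_nonneg_eq_0_iff[symmetric]) auto
      thus ?thesis using that by auto
    qed
    then show ?thesis unfolding L_def[symmetric] by simp
  next
    case False
    define t where "t = real (L!(k - 1))"
    have ge: "real (L!i) \<ge> t" if "i < k" for i
      unfolding t_def using sortedL that False kn lenL
      by (cases "i = k - 1") (auto simp: sorted_wrt_iff_nth_less)
    have le: "real (L!i) \<le> t" if "k \<le> i" "i < n" for i
      unfolding t_def using sortedL that False kn lenL
      by (auto simp: sorted_wrt_iff_nth_less)
    define f where "f x = max (real x - t) 0" for x :: nat
    have "(\<Sum>a<n. real (d a) * w a) = (\<Sum>a<n. (real (d a) - t) * w a) + t * (\<Sum>a<n. w a)"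
      by (simp add: algebra_simps sum.distrib sum_distrib_left sum_subtractf)
    also have "(\<Sum>a<n. (real (d a) - t) * w a) \<le> (\<Sum>a<n. f (d a))"
    proof (intro sum_mono)
      fix a assume "a \<in> {..<n}"
      then have "0 \<le> w a" "w a \<le> 1" using w by auto
      then show "(real (d a) - t) * w a \<le> f (d a)" unfolding f_def
        by (cases "real (d a) - t \<ge> 0") (auto simp: mult_left_le mult_nonneg_nonpos2 intro: order_trans[of _ 0])
    qed
    also have "(\<Sum>a<n. f (d a)) = sum_list (map f L)"
    proof -
      have "(\<Sum>a<n. f (d a)) = sum_list (map f (map d [0..<n]))"
        by (simp add: sum_list_sum_nth atLeast0LessThan)
      also have "\<dots> = sum_mset (image_mset f (mset (map d [0..<n])))"
        by (metis mset_map sum_mset_sum_list)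
      also have "\<dots> = sum_list (map f L)" unfolding msL[symmetric]
        by (metis mset_map sum_mset_sum_list)
      finally show ?thesis .
    qed
    also have "sum_list (map f L) = (\<Sum>i<n. f (L!i))"
      using lenL by (simp add: sum_list_sum_nth atLeast0LessThan)
    also have "\<dots> = (\<Sum>i<k. f (L!i)) + (\<Sum>i\<in>{k..<n}. f (L!i))"
      using kn by (metis atLeast0LessThan sum.atLeastLessThan_concat zero_le)
    also have "(\<Sum>i\<in>{k..<n}. f (L!i)) = 0"
      using le unfolding f_def by (intro sum.neutral) auto
    also have "(\<Sum>i<k. f (L!i)) = (\<Sum>i<k. real (L!i)) - t * real k"
      using ge unfolding f_def by (simp add: sum_subtractf)
    finally show ?thesis using sw rhs unfolding L_def[symmetric] by simp
  qed
qed

lemma cp_finite: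
  assumes "clique_partition n E F"
  shows "F \<subseteq> Pow {0..<n}" "finite F"
proof -
  show "F \<subseteq> Pow {0..<n}" using assms unfolding clique_partition_def is_clique_def by auto
  then show "finite F" by (rule finite_subset) simp
qed

lemma cp_count:
  assumes cpF: "clique_partition n E F" and sg: "simple_graph n E"
  shows "card {C \<in> F. a \<in> C \<and> b \<in> C} =
    (if a = b then clique_degree F a else if E a b then 1 else 0)"
proof (cases "a = b")
  case True
  then show ?thesis unfolding clique_degree_def by simp
next
  case False
  show ?thesis
  proof (cases "E a b")
    case True
    then obtain C where C: "C \<in> F" "a \<in> C" "b \<in> C"
      and u: "\<And>C'. C' \<in> F \<and> a \<in> C' \<and> b \<in> C' \<Longrightarrow> C' = C"
      using cpF unfolding clique_partition_def by metis
    have "{C \<in> F. a \<in> C \<and> b \<in> C} = {C}" using C u by blast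
    then show ?thesis using False True by simp
  next
    case nE: False
    have "{C \<in> F. a \<in> C \<and> b \<in> C} = {}"
      using cpF False nE unfolding clique_partition_def is_clique_def by blast
    then have "card {C \<in> F. a \<in> C \<and> b \<in> C} = 0" by (simp only: card.empty)
    then show ?thesis using False nE by simp
  qed
qed

lemma clique_identity:
  fixes x :: "nat \<Rightarrow> real"
  assumes cpF: "clique_partition n E F" and sg: "simple_graph n E"
  shows "(\<Sum>a<n. \<Sum>b<n. (if E a b then 1 else 0) * x a * x b) =
    (\<Sum>C\<in>F. (\<Sum>v\<in>C. x v)\<^sup>2) - (\<Sum>a<n. real (clique_degree F a) * (x a)\<^sup>2)"
proof -
  note fin = cp_finite[OF cpF]
  define g where "g C a b = (if a \<in> C \<and> b \<in> C then x a * x b else 0)" for C a b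
  have sq: "(\<Sum>v\<in>C. x v)\<^sup>2 = (\<Sum>a<n. \<Sum>b<n. g C a b)" if C: "C \<in> F" for C
  proof -
    have Cs: "C \<subseteq> {..<n}"
    proof
      fix v assume "v \<in> C"
      then have "v \<in> {0..<n}" using fin(1) C by blast
      then show "v \<in> {..<n}" by simp
    qed
    have "(\<Sum>v\<in>C. x v) = (\<Sum>a<n. if a \<in> C then x a else 0)"
      using Cs by (simp add: sum.inter_restrict[symmetric] Int_absorb1)
    then have "(\<Sum>v\<in>C. x v)\<^sup>2 = (\<Sum>a<n. if a \<in> C then x a else 0)\<^sup>2" by simp
    also have "\<dots> = (\<Sum>a<n. \<Sum>b<n. (if a \<in> C then x a else 0) * (if b \<in> C then x b else 0))"
      by (simp only: power2_eq_square sum_product)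
    also have "\<dots> = (\<Sum>a<n. \<Sum>b<n. g C a b)"
      unfolding g_def by (intro sum.cong) auto
    finally show ?thesis .
  qed
  have "(\<Sum>C\<in>F. (\<Sum>v\<in>C. x v)\<^sup>2) = (\<Sum>C\<in>F. \<Sum>a<n. \<Sum>b<n. g C a b)"
    using sq by simp
  also have "\<dots> = (\<Sum>a<n. \<Sum>C\<in>F. \<Sum>b<n. g C a b)" by (rule sum.swap)
  also have "\<dots> = (\<Sum>a<n. \<Sum>b<n. \<Sum>C\<in>F. g C a b)"
    by (rule sum.cong[OF refl], rule sum.swap)
  also have "\<dots> = (\<Sum>a<n. \<Sum>b<n. x a * x b * real (card {C \<in> F. a \<in> C \<and> b \<in> C}))"
  proof (intro sum.cong refl)
    fix a b
    have "(\<Sum>C\<in>F. g C a b) = (\<Sum>C\<in>{C \<in> F. a \<in> C \<and> b \<in> C}. x a * x b)"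
      unfolding g_def using fin(2) by (simp only: sum.inter_filter)
    then show "(\<Sum>C\<in>F. g C a b) = x a * x b * real (card {C \<in> F. a \<in> C \<and> b \<in> C})"
      by simp
  qed
  also have "\<dots> = (\<Sum>a<n. \<Sum>b<n. (if a = b then real (clique_degree F a) * (x a)\<^sup>2 else 0)
      + (if E a b then 1 else 0) * x a * x b)"
  proof (intro sum.cong refl)
    fix a b
    have "\<not> E a a" using sg unfolding simple_graph_def by auto
    then show "x a * x b * real (card {C \<in> F. a \<in> C \<and> b \<in> C}) =
      (if a = b then real (clique_degree F a) * (x a)\<^sup>2 else 0) + (if E a b then 1 else 0) * x a * x b"
      unfolding cp_count[OF cpF sg] by (auto simp: power2_eq_square)
  qed
  also have "\<dots> = (\<Sum>a<n. real (clique_degree F a) * (x a)\<^sup>2) +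
      (\<Sum>a<n. \<Sum>b<n. (if E a b then 1 else 0) * x a * x b)"
    by (simp add: sum.distrib)
  finally show ?thesis by simp
qed

lemma bilin_expand:
  fixes B :: "nat \<Rightarrow> nat \<Rightarrow> real" and c :: "'i \<Rightarrow> real" and u :: "'i \<Rightarrow> nat \<Rightarrow> real"
  shows "(\<Sum>a<n. \<Sum>b<n. B a b * (\<Sum>i\<in>P. c i * u i a) * (\<Sum>j\<in>P. c j * u j b)) =
    (\<Sum>i\<in>P. \<Sum>j\<in>P. c i * c j * (\<Sum>a<n. \<Sum>b<n. B a b * u i a * u j b))"
proof -
  have "(\<Sum>a<n. \<Sum>b<n. B a b * (\<Sum>i\<in>P. c i * u i a) * (\<Sum>j\<in>P. c j * u j b)) =
    (\<Sum>a<n. \<Sum>b<n. \<Sum>i\<in>P. \<Sum>j\<in>P. c i * c j * (B a b * u i a * u j b))"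
    by (simp add: sum_distrib_left sum_distrib_right mult_ac)
  also have "\<dots> = (\<Sum>a<n. \<Sum>i\<in>P. \<Sum>b<n. \<Sum>j\<in>P. c i * c j * (B a b * u i a * u j b))"
    by (rule sum.cong[OF refl], rule sum.swap)
  also have "\<dots> = (\<Sum>i\<in>P. \<Sum>a<n. \<Sum>b<n. \<Sum>j\<in>P. c i * c j * (B a b * u i a * u j b))"
    by (rule sum.swap)
  also have "\<dots> = (\<Sum>i\<in>P. \<Sum>a<n. \<Sum>j\<in>P. \<Sum>b<n. c i * c j * (B a b * u i a * u j b))"
    by (rule sum.cong[OF refl], rule sum.cong[OF refl], rule sum.swap)
  also have "\<dots> = (\<Sum>i\<in>P. \<Sum>j\<in>P. \<Sum>a<n. \<Sum>b<n. c i * c j * (B a b * u i a * u j b))"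
    by (rule sum.cong[OF refl], rule sum.swap)
  also have "\<dots> = (\<Sum>i\<in>P. \<Sum>j\<in>P. c i * c j * (\<Sum>a<n. \<Sum>b<n. B a b * u i a * u j b))"
    by (simp add: sum_distrib_left)
  finally show ?thesis .
qed

lemma bilin_form:
  fixes A :: "real mat"
  assumes A: "A \<in> carrier_mat n n" and x: "x \<in> carrier_vec n" and y: "y \<in> carrier_vec n"
  shows "x \<bullet> (A *\<^sub>v y) = (\<Sum>a<n. \<Sum>b<n. A$$(a,b) * x$a * y$b)"
proof -
  have "x \<bullet> (A *\<^sub>v y) = (\<Sum>a<n. x$a * (\<Sum>b<n. A$$(a,b) * y$b))"
    using A x y by (simp add: scalar_prod_def atLeast0LessThan row_def)
  also have "\<dots> = (\<Sum>a<n. \<Sum>b<n. A$$(a,b) * x$a * y$b)"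
    by (simp add: sum_distrib_left mult.commute mult.left_commute)
  finally show ?thesis .
qed

lemma delta_sum:
  fixes a n :: nat
  assumes "a < n"
  shows "(\<Sum>b<n. (if a = b then 1 else 0) * (X::real) * Y b) = X * Y a"
proof -
  have "(\<Sum>b<n. (if a = b then 1 else 0) * X * Y b) = (\<Sum>b<n. if a = b then X * Y b else 0)"
    by (intro sum.cong) auto
  also have "\<dots> = X * Y a" using assms by (subst sum.delta') auto
  finally show ?thesis .
qed

theorem mainTheorem12:
  fixes n :: nat and E :: "nat \<Rightarrow> nat \<Rightarrow> bool"
  assumes "simple_graph n E"
  shows "graph_energy n E \<le>
           2 * real (Min {top_clique_degree_sum n F (neg_inertia n E) | F. clique_partition n E F})
         \<and> ((\<exists>F. clique_partition n E F \<and> card F = cp n E \<and> cp n E = n - neg_inertia n E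
                \<and> clique_regular n F) \<longrightarrow>
            graph_energy n E =
              2 * real (Min {top_clique_degree_sum n F (neg_inertia n E) | F. clique_partition n E F}))"
proof -
  have sg: "simple_graph n E" by (rule assms)
  define A where "A = adj_matrix n E"
  define k where "k = neg_inertia n E"
  have A: "A \<in> carrier_mat n n" unfolding A_def adj_matrix_def by simp
  have Aij: "\<And>a b. a < n \<Longrightarrow> b < n \<Longrightarrow> A$$(a,b) = (if E a b then 1 else 0)"
    unfolding A_def adj_matrix_def by simp
  have symE: "\<And>a b. E a b \<longleftrightarrow> E b a" and irr: "\<And>a. \<not> E a a"
    and bnd: "\<And>a b. E a b \<Longrightarrow> a < n \<and> b < n"
    using sg unfolding simple_graph_def by blast+
  have sym: "\<And>i j. i < n \<Longrightarrow> j < n \<Longrightarrow> A$$(i,j) = A$$(j,i)" using Aij symE by simp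
  obtain us es where on: "orthonormal n us" and les: "length es = n"
    and eig: "\<forall>i<n. A *\<^sub>v (us!i) = es!i \<cdot>\<^sub>v us!i"
    using spectral[OF A sym] by blast
  have eig': "\<And>i. i < n \<Longrightarrow> A *\<^sub>v (us!i) = es!i \<cdot>\<^sub>v us!i" using eig by blast
  have car: "\<And>i. i < n \<Longrightarrow> us!i \<in> carrier_vec n"
    and orth: "\<And>i j. i < n \<Longrightarrow> j < n \<Longrightarrow> us!i \<bullet> us!j = (if i = j then 1 else 0)"
    using on unfolding orthonormal_def by auto
  have eigs: "adj_eigenvalues n E = mset es"
    unfolding adj_eigenvalues_def A_def[symmetric]
    using char_poly_spectral[OF A on les eig'] proots_linear_prod by simp
  define N where "N = {i. i < n \<and> es!i < 0}"
  have finN: "finite N" and Nsub: "N \<subseteq> {..<n}" unfolding N_def by auto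
  have kN: "k = card N"
  proof -
    have "filter_mset (\<lambda>x. x < 0) (mset es) = mset (filter (\<lambda>x. x < 0) es)" by simp
    then have "k = length (filter (\<lambda>x. x < 0) es)"
      unfolding k_def neg_inertia_def eigs by (simp only: size_mset)
    also have "\<dots> = card N" unfolding N_def length_filter_conv_card les ..
    finally show ?thesis .
  qed
  have kn: "k \<le> n" using kN card_mono[OF _ Nsub] by simp
  have energy: "graph_energy n E = (\<Sum>i<n. \<bar>es!i\<bar>)"
  proof -
    have "image_mset abs (mset es) = mset (map abs es)" by simp
    then have "graph_energy n E = sum_list (map abs es)"
      unfolding graph_energy_def eigs by (simp only: sum_mset_sum_list)
    also have "\<dots> = (\<Sum>i<n. \<bar>es!i\<bar>)" using les by (simp add: sum_list_sum_nth atLeast0LessThan)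
    finally show ?thesis .
  qed
  have tr0: "(\<Sum>i<n. es!i) = 0" using trace_spectral[OF A on les eig'] Aij irr by simp
  have energy2: "graph_energy n E = - 2 * (\<Sum>i\<in>N. es!i)"
  proof -
    have "(\<Sum>i<n. \<bar>es!i\<bar>) = (\<Sum>i<n. es!i - 2 * (if es!i < 0 then es!i else 0))"
      by (intro sum.cong) auto
    also have "\<dots> = (\<Sum>i<n. es!i) - 2 * (\<Sum>i<n. if es!i < 0 then es!i else 0)"
      by (simp add: sum_subtractf sum_distrib_left)
    also have "(\<Sum>i<n. if es!i < 0 then es!i else 0) = (\<Sum>i\<in>N. es!i)"
    proof -
      have "N = {i \<in> {..<n}. es!i < 0}" unfolding N_def by auto
      then show ?thesis by (simp only: sum.inter_filter finite_lessThan)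
    qed
    finally show ?thesis using energy tr0 by simp
  qed
  have eq_quad: "es!i = (\<Sum>a<n. \<Sum>b<n. (if E a b then 1 else 0) * us!i$a * us!i$b)"
    if i: "i < n" for i
  proof -
    have "us!i \<bullet> (A *\<^sub>v us!i) = es!i" using eig'[OF i] orth[OF i i] car[OF i] by simp
    then show ?thesis using bilin_form[OF A car[OF i] car[OF i]] Aij by simp
  qed
  have unit: "(\<Sum>a<n. (us!i$a)\<^sup>2) = 1" if i: "i < n" for i
    using orth[OF i i] car[OF i] by (simp add: scalar_prod_def atLeast0LessThan power2_eq_square)
  have rows1: "(\<Sum>i<n. (us!i$a)\<^sup>2) = 1" if a: "a < n" for a
    using orthonormal_rows[OF on a a] by (simp add: power2_eq_square)

  have bound: "graph_energy n E \<le> 2 * real (top_clique_degree_sum n F k)"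
    if cpF: "clique_partition n E F" for F
  proof -
    define d where "d = clique_degree F"
    define w where "w a = (\<Sum>i\<in>N. (us!i$a)\<^sup>2)" for a
    have lower: "es!i \<ge> - (\<Sum>a<n. real (d a) * (us!i$a)\<^sup>2)" if i: "i < n" for i
    proof -
      have "(\<Sum>C\<in>F. (\<Sum>v\<in>C. us!i$v)\<^sup>2) \<ge> 0" by (intro sum_nonneg) auto
      then show ?thesis using eq_quad[OF i] clique_identity[OF cpF sg, of "\<lambda>a. us!i$a"]
        unfolding d_def by linarith
    qed
    have "- (\<Sum>i\<in>N. es!i) \<le> (\<Sum>i\<in>N. \<Sum>a<n. real (d a) * (us!i$a)\<^sup>2)"
    proof -
      have "(\<Sum>i\<in>N. - es!i) \<le> (\<Sum>i\<in>N. \<Sum>a<n. real (d a) * (us!i$a)\<^sup>2)"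
      proof (rule sum_mono)
        fix i assume "i \<in> N"
        then have "i < n" using Nsub by auto
        then show "- es!i \<le> (\<Sum>a<n. real (d a) * (us!i$a)\<^sup>2)" using lower by force
      qed
      then show ?thesis by (simp add: sum_negf)
    qed
    also have "(\<Sum>i\<in>N. \<Sum>a<n. real (d a) * (us!i$a)\<^sup>2) = (\<Sum>a<n. \<Sum>i\<in>N. real (d a) * (us!i$a)\<^sup>2)"
      by (rule sum.swap)
    also have "\<dots> = (\<Sum>a<n. real (d a) * w a)"
      unfolding w_def by (simp add: sum_distrib_left)
    also have "\<dots> \<le> real (sum_list (take k (rev (sort (map d [0..<n])))))"
    proof (rule top_sum_bound[OF _ _ kn])
      fix a assume a: "a < n"
      have "w a \<le> (\<Sum>i<n. (us!i$a)\<^sup>2)"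
        unfolding w_def by (rule sum_mono2[OF _ Nsub]) auto
      then show "0 \<le> w a \<and> w a \<le> 1" using rows1[OF a] unfolding w_def
        by (auto intro: sum_nonneg)
    next
      have "(\<Sum>a<n. w a) = (\<Sum>i\<in>N. \<Sum>a<n. (us!i$a)\<^sup>2)" unfolding w_def by (rule sum.swap)
      also have "\<dots> = (\<Sum>i\<in>N. 1)" using unit Nsub by (intro sum.cong) auto
      finally show "(\<Sum>a<n. w a) = real k" using kN by simp
    qed
    finally show ?thesis
      unfolding energy2 top_clique_degree_sum_def d_def by simp
  qed

  define S where "S = {top_clique_degree_sum n F k | F. clique_partition n E F}"
  have finS: "finite S"
  proof -
    have "S \<subseteq> (\<lambda>F. top_clique_degree_sum n F k) ` Pow (Pow {0..<n})"
      unfolding S_def using cp_finite(1) by blast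
    then show ?thesis by (rule finite_subset) simp
  qed
  define F0 where "F0 = {{a,b} | a b. E a b}"
  have cpF0: "clique_partition n E F0"
    unfolding clique_partition_def
  proof (intro conjI allI impI ballI)
    fix C assume "C \<in> F0"
    then obtain a b where C: "C = {a,b}" "E a b" unfolding F0_def by blast
    then show "is_clique n E C" unfolding is_clique_def using bnd symE by auto
  next
    fix u v assume uv: "E u v"
    show "\<exists>!C. C \<in> F0 \<and> u \<in> C \<and> v \<in> C"
    proof (rule ex1I[of _ "{u,v}"])
      show "{u,v} \<in> F0 \<and> u \<in> {u,v} \<and> v \<in> {u,v}" unfolding F0_def using uv by blast
    next
      fix C assume "C \<in> F0 \<and> u \<in> C \<and> v \<in> C"
      then obtain a b where "C = {a,b}" "E a b" "u \<in> C" "v \<in> C" unfolding F0_def by blast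
      moreover have "u \<noteq> v" using uv irr by blast
      ultimately show "C = {u,v}" by blast
    qed
  qed
  have neS: "S \<noteq> {}" unfolding S_def using cpF0 by blast
  have "Min S \<in> S" using Min_in[OF finS neS] .
  then obtain Fm where cpFm: "clique_partition n E Fm" and Fm: "Min S = top_clique_degree_sum n Fm k"
    unfolding S_def by blast
  have part1: "graph_energy n E \<le> 2 * real (Min S)" using bound[OF cpFm] Fm by simp

  have part2: "graph_energy n E = 2 * real (Min S)"
    if ex: "\<exists>F. clique_partition n E F \<and> card F = cp n E \<and> cp n E = n - k \<and> clique_regular n F"
  proof -
    obtain F where cpF: "clique_partition n E F" and cardF: "card F = n - k"
      and reg: "clique_regular n F" using ex by auto
    define t where "t = clique_degree F 0"
    have degt: "clique_degree F a = t" if "a < n" for a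
      using reg that unfolding clique_regular_def t_def by (metis gr_implies_not0 neq0_conv)
    have degs: "map (clique_degree F) [0..<n] = replicate n t"
      by (intro nth_equalityI) (auto simp: degt)
    have top: "top_clique_degree_sum n F k = k * t"
      unfolding top_clique_degree_sum_def degs using kn
      by (simp add: sorted_sort_id[of "replicate n t"] sorted_replicate take_replicate min_def
          sum_list_replicate)
    have le1: "real (Min S) \<le> real (k * t)"
    proof -
      have "top_clique_degree_sum n F k \<in> S" unfolding S_def using cpF by blast
      then have "Min S \<le> k * t" using Min_le[OF finS] top by metis
      then show ?thesis by (simp only: of_nat_le_iff)
    qed
    have ge: "graph_energy n E \<ge> 2 * real (k * t)"
    proof (cases "k = 0 \<or> t = 0")
      case True
      have "graph_energy n E \<ge> 0" unfolding energy by (intro sum_nonneg) auto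
      then show ?thesis using True by auto
    next
      case False
      then have k0: "k > 0" and t0: "t > 0" by auto
      define P where "P = {i. i < n \<and> es!i > - real t}"
      have finP: "finite P" and Psub: "P \<subseteq> {..<n}" unfolding P_def by auto
      have finF: "finite F" using cp_finite(2)[OF cpF] .
      have cardP: "card P \<le> card F"
      proof (rule ccontr)
        assume "\<not> card P \<le> card F"
        then have "card F < card P" by simp
        then obtain c where c: "\<exists>i\<in>P. c i \<noteq> 0"
          and cC: "\<forall>C\<in>F. (\<Sum>i\<in>P. c i * (\<Sum>v\<in>C. us!i$v)) = 0"
          using lin_dep_exists[OF finF finP, of "\<lambda>i C. \<Sum>v\<in>C. us!i$v"] by blast
        define x where "x a = (\<Sum>i\<in>P. c i * us!i$a)" for a
        have xC: "(\<Sum>v\<in>C. x v) = 0" if C: "C \<in> F" for C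
        proof -
          have "(\<Sum>v\<in>C. x v) = (\<Sum>i\<in>P. \<Sum>v\<in>C. c i * us!i$v)" unfolding x_def by (rule sum.swap)
          also have "\<dots> = (\<Sum>i\<in>P. c i * (\<Sum>v\<in>C. us!i$v))" by (simp add: sum_distrib_left)
          finally show ?thesis using cC C by simp
        qed
        have q1: "(\<Sum>a<n. \<Sum>b<n. (if E a b then 1 else 0) * x a * x b) = - real t * (\<Sum>a<n. (x a)\<^sup>2)"
          using clique_identity[OF cpF sg, of x] xC degt
          by (simp add: sum_distrib_left sum_negf)
        have inner1: "(\<Sum>a<n. \<Sum>b<n. (if E a b then 1 else 0) * us!i$a * us!j$b) = (if i = j then es!i else 0)"
          if "i \<in> P" "j \<in> P" for i j
        proof -
          have i: "i < n" and j: "j < n" using that Psub by auto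
          have "us!i \<bullet> (A *\<^sub>v us!j) = (if i = j then es!i else 0)"
            using eig'[OF j] orth[OF i j] car[OF i] car[OF j] by simp
          then show ?thesis using bilin_form[OF A car[OF i] car[OF j]] Aij by simp
        qed
        have inner2: "(\<Sum>a<n. \<Sum>b<n. (if a = b then 1 else 0) * us!i$a * us!j$b) = (if i = j then 1 else 0)"
          if "i \<in> P" "j \<in> P" for i j
        proof -
          have i: "i < n" and j: "j < n" using that Psub by auto
          have "(\<Sum>a<n. \<Sum>b<n. (if a = b then 1 else 0) * us!i$a * us!j$b) = (\<Sum>a<n. us!i$a * us!j$a)"
            by (intro sum.cong refl) (simp add: delta_sum)
          also have "\<dots> = us!i \<bullet> us!j" using car[OF j] by (simp add: scalar_prod_def atLeast0LessThan)
          finally show ?thesis using orth[OF i j] by simp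
        qed
        have q2: "(\<Sum>a<n. \<Sum>b<n. (if E a b then 1 else 0) * x a * x b) = (\<Sum>i\<in>P. (c i)\<^sup>2 * es!i)"
        proof -
          have "(\<Sum>a<n. \<Sum>b<n. (if E a b then 1 else 0) * x a * x b) =
            (\<Sum>i\<in>P. \<Sum>j\<in>P. c i * c j * (\<Sum>a<n. \<Sum>b<n. (if E a b then 1 else 0) * us!i$a * us!j$b))"
            unfolding x_def by (rule bilin_expand)
          also have "\<dots> = (\<Sum>i\<in>P. \<Sum>j\<in>P. if i = j then c i * c j * es!i else 0)"
            using inner1 by (intro sum.cong refl) simp
          also have "\<dots> = (\<Sum>i\<in>P. (c i)\<^sup>2 * es!i)"
            using finP by (simp add: power2_eq_square)
          finally show ?thesis .
        qed
        have q3: "(\<Sum>a<n. (x a)\<^sup>2) = (\<Sum>i\<in>P. (c i)\<^sup>2)"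
        proof -
          have "(\<Sum>a<n. (x a)\<^sup>2) = (\<Sum>a<n. \<Sum>b<n. (if a = b then 1 else 0) * x a * x b)"
            by (intro sum.cong refl) (simp add: delta_sum power2_eq_square)
          also have "\<dots> = (\<Sum>i\<in>P. \<Sum>j\<in>P. c i * c j * (\<Sum>a<n. \<Sum>b<n. (if a = b then 1 else 0) * us!i$a * us!j$b))"
            unfolding x_def by (rule bilin_expand)
          also have "\<dots> = (\<Sum>i\<in>P. \<Sum>j\<in>P. if i = j then c i * c j else 0)"
            using inner2 by (intro sum.cong refl) simp
          also have "\<dots> = (\<Sum>i\<in>P. (c i)\<^sup>2)"
            using finP by (simp add: power2_eq_square)
          finally show ?thesis .
        qed
        have zero: "(\<Sum>i\<in>P. (c i)\<^sup>2 * (es!i + real t)) = 0"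
        proof -
          have z1: "(\<Sum>i\<in>P. (c i)\<^sup>2 * es!i) = - real t * (\<Sum>i\<in>P. (c i)\<^sup>2)"
            using q1 q2 q3 by metis
          have "(\<Sum>i\<in>P. (c i)\<^sup>2 * (es!i + real t)) = (\<Sum>i\<in>P. (c i)\<^sup>2 * es!i) + real t * (\<Sum>i\<in>P. (c i)\<^sup>2)"
            by (simp add: algebra_simps sum.distrib sum_distrib_left)
          then show ?thesis using z1 by simp
        qed
        obtain i0 where i0: "i0 \<in> P" "c i0 \<noteq> 0" using c by blast
        have "(\<Sum>i\<in>P. (c i)\<^sup>2 * (es!i + real t)) > 0"
        proof (rule sum_pos2[OF finP i0(1)])
          show "0 < (c i0)\<^sup>2 * (es!i0 + real t)" using i0 unfolding P_def by simp
          show "\<And>i. i \<in> P \<Longrightarrow> 0 \<le> (c i)\<^sup>2 * (es!i + real t)" unfolding P_def by simp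
        qed
        then show False using zero by simp
      qed
      define Q where "Q = {i. i < n \<and> es!i \<le> - real t}"
      have QP: "Q = {..<n} - P" unfolding P_def Q_def by auto
      have "card Q = n - card P" unfolding QP using Psub finP by (simp add: card_Diff_subset)
      hence cQ: "card Q \<ge> k" using cardP cardF kn by linarith
      have QN: "Q \<subseteq> N" unfolding Q_def N_def using t0 by auto
      have "card Q \<le> card N" using card_mono[OF finN QN] .
      hence "card Q = card N" using cQ kN by simp
      hence QeN: "Q = N" using card_subset_eq[OF finN QN] by simp
      have "(\<Sum>i\<in>N. es!i) \<le> (\<Sum>i\<in>N. - real t)"
        unfolding QeN[symmetric] by (intro sum_mono) (auto simp: Q_def)
      also have "\<dots> = - real k * real t" using kN by simp
      finally show ?thesis unfolding energy2 by simp
    qed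
    show ?thesis using part1 le1 ge by simp
  qed
  show ?thesis using part1 part2 unfolding S_def k_def by blast
qed

end
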